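(* Let $n\ge1$, let $B=\{\cos(\theta)|0\rangle+\sin(\theta)|1\rangle\mid 0\le\theta<2\pi\}$ be the set of real-amplitude one-qubit pure states, and let $\mathcal S=B^{\otimes n}=\{|b_1\rangle\otimes\cdots\otimes|b_n\rangle\mid |b_j\rangle\in B\}$. Let $\sigma_0=\begin{pmatrix}1&0\\0&1\end{pmatrix}$, $\sigma_2=\begin{pmatrix}0&-i\\i&0\end{pmatrix}$, and for $x\in\{0,2\}^n$ let $\overline{\sigma_x}=\sigma_{x_1}\otimes\cdots\otimes\sigma_{x_n}$. Let $\mathcal E=\{\frac{1}{\sqrt{2^n}}\overline{\sigma_x}\mid x\in\{0,2\}^n\}$. Then $[\mathcal S,\mathcal E,\tilde I_{2^n}]$ is a private quantum channel; that is, for every $|\phi\rangle\in\mathcal S$, $$\sum_{x\in\{0,2\}^n}\frac{1}{2^n}\overline{\sigma_x}\,|\phi\rangle\langle\phi|\,\overline{\sigma_x}^\dagger=\tilde I_{2^n}.$$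
   Context: $\mathcal{H}_{2^n}$ denotes the Hilbert space of $n$ qubits; $\tilde I_{M}=\frac1M I_M$ is the totally mixed state. A superoperator $\mathcal{E}=\{\sqrt{p_i}U_i\mid 1\le i\le N\}$ (with $U_i$ unitary, $p_i\ge0$, $\sum_ip_i=1$) acts by $\mathcal{E}(\rho)=\sum_ip_iU_i\rho U_i^\dagger$. Definition (private quantum channel, PQC): let $\mathcal S\subseteq\mathcal H_{2^n}$ be a set of pure $n$-qubit states, $\mathcal E=\{\sqrt{p_i}U_i\}$ with each $U_i$ unitary on $\mathcal H_{2^m}$, $\rho_a$ an $(m-n)$-qubit density matrix, $\rho_0$ an $m$-qubit density matrix. Then $[\mathcal S,\mathcal E,\rho_a,\rho_0]$ is a PQC iff for all $|\phi\rangle\in\mathcal S$, $\sum_ip_iU_i(|\phi\rangle\langle\phi|\otimes\rho_a)U_i^\dagger=\rho_0$. When $m=n$ (no ancilla) $\rho_a$ is omitted and one writes $[\mathcal S,\mathcal E,\rho_0]$. *)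

theory Defs
  imports "HOL-Analysis.Analysis" "Jordan_Normal_Form.Matrix"
begin

definition kron_mat :: "complex mat \<Rightarrow> complex mat \<Rightarrow> complex mat" where
  "kron_mat A B = mat (dim_row A * dim_row B) (dim_col A * dim_col B)
     (\<lambda>(i,j). A $$ (i div dim_row B, j div dim_col B) * B $$ (i mod dim_row B, j mod dim_col B))"

definition kron_vec :: "complex vec \<Rightarrow> complex vec \<Rightarrow> complex vec" where
  "kron_vec u v = vec (dim_vec u * dim_vec v) (\<lambda>i. u $ (i div dim_vec v) * v $ (i mod dim_vec v))"

definition tensor_mats :: "complex mat list \<Rightarrow> complex mat" where
  "tensor_mats As = foldr kron_mat As (1\<^sub>m 1)"

definition tensor_vecs :: "complex vec list \<Rightarrow> complex vec" where
  "tensor_vecs vs = foldr kron_vec vs (vec 1 (\<lambda>_. 1))"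

definition dagger :: "complex mat \<Rightarrow> complex mat" where
  "dagger A = mat (dim_col A) (dim_row A) (\<lambda>(i,j). cnj (A $$ (j,i)))"

definition ket_bra :: "complex vec \<Rightarrow> complex mat" where
  "ket_bra v = mat (dim_vec v) (dim_vec v) (\<lambda>(i,j). v $ i * cnj (v $ j))"

definition unitary_mat :: "nat \<Rightarrow> complex mat \<Rightarrow> bool" where
  "unitary_mat d U \<longleftrightarrow> U \<in> carrier_mat d d \<and> U * dagger U = 1\<^sub>m d"

(* A superoperator {sqrt p_i U_i} is represented by the list of pairs (p_i, U_i);
   it acts on d x d density matrices by rho \<mapsto> \<Sum>_i p_i U_i rho U_i^dagger *)
definition superop_apply :: "nat \<Rightarrow> (real \<times> complex mat) list \<Rightarrow> complex mat \<Rightarrow> complex mat" where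
  "superop_apply d E \<rho> = foldr (\<lambda>(p,U) acc. complex_of_real p \<cdot>\<^sub>m (U * \<rho> * dagger U) + acc) E (0\<^sub>m d d)"

definition is_superop :: "nat \<Rightarrow> (real \<times> complex mat) list \<Rightarrow> bool" where
  "is_superop d E \<longleftrightarrow> (\<forall>(p,U)\<in>set E. p \<ge> 0 \<and> unitary_mat d U) \<and> sum_list (map fst E) = 1"

definition is_PQC :: "nat \<Rightarrow> complex vec set \<Rightarrow> (real \<times> complex mat) list \<Rightarrow> complex mat \<Rightarrow> bool" where
  "is_PQC n S E \<rho>0 \<longleftrightarrow> is_superop (2^n) E \<and> \<rho>0 \<in> carrier_mat (2^n) (2^n) \<and>
     (\<forall>\<phi>\<in>S. dim_vec \<phi> = 2^n \<and> superop_apply (2^n) E (ket_bra \<phi>) = \<rho>0)"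

definition mixed_state :: "nat \<Rightarrow> complex mat" where
  "mixed_state M = (1 / of_nat M) \<cdot>\<^sub>m 1\<^sub>m M"

definition real_qubit :: "real \<Rightarrow> complex vec" where
  "real_qubit \<theta> = vec_of_list [complex_of_real (cos \<theta>), complex_of_real (sin \<theta>)]"

definition B_states :: "complex vec set" where
  "B_states = {real_qubit \<theta> | \<theta>. 0 \<le> \<theta> \<and> \<theta> < 2 * pi}"

definition tensor_power_states :: "nat \<Rightarrow> complex vec set \<Rightarrow> complex vec set" where
  "tensor_power_states n B = {tensor_vecs bs | bs. length bs = n \<and> set bs \<subseteq> B}"

definition sigma0 :: "complex mat" where
  "sigma0 = mat_of_rows_list 2 [[1, 0], [0, 1]]"

definition sigma2 :: "complex mat" where
  "sigma2 = mat_of_rows_list 2 [[0, - \<i>], [\<i>, 0]]"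

definition pauli :: "nat \<Rightarrow> complex mat" where
  "pauli k = (if k = 0 then sigma0 else sigma2)"

definition sigma_bar :: "nat list \<Rightarrow> complex mat" where
  "sigma_bar x = tensor_mats (map pauli x)"

end

theory Submission
  imports Defs
begin

lemma sum_reindex_prod:
  fixes g :: "nat \<Rightarrow> 'a::comm_monoid_add"
  shows "(\<Sum>k<a*b. g k) = (\<Sum>p<a. \<Sum>q<b. g (p*b+q))"
proof (induction a)
  case 0 then show ?case by simp
next
  case (Suc a)
  have "{..<Suc a * b} = {..<a*b} \<union> {a*b..<a*b+b}" by auto
  then have "(\<Sum>k<Suc a*b. g k) = (\<Sum>k<a*b. g k) + (\<Sum>k\<in>{a*b..<a*b+b}. g k)"
    by (simp add: sum.union_disjoint ivl_disj_int)
  also have "(\<Sum>k\<in>{a*b..<a*b+b}. g k) = (\<Sum>q<b. g (a*b+q))"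
    using sum.shift_bounds_nat_ivl[of g 0 "a*b" b] by (simp add: atLeast0LessThan add.commute)
  finally show ?case using Suc by simp
qed

lemma mult_entry:
  assumes "i < dim_row A" "j < dim_col B" "dim_col A = dim_row B"
  shows "(A * B) $$ (i,j) = (\<Sum>k<dim_col A. A $$ (i,k) * B $$ (k,j))"
  using assms by (simp add: scalar_prod_def lessThan_atLeast0)

lemma kron_dims[simp]:
  "dim_row (kron_mat A B) = dim_row A * dim_row B"
  "dim_col (kron_mat A B) = dim_col A * dim_col B"
  by (simp_all add: kron_mat_def)

lemma kron_index[simp]:
  "i < dim_row A * dim_row B \<Longrightarrow> j < dim_col A * dim_col B \<Longrightarrow>
   kron_mat A B $$ (i,j) = A $$ (i div dim_row B, j div dim_col B) * B $$ (i mod dim_row B, j mod dim_col B)"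
  by (simp add: kron_mat_def)

lemma div_lt_mult: "(i::nat) < a * b \<Longrightarrow> i div b < a"
  by (simp add: less_mult_imp_div_less)

lemma mod_lt_mult: "(i::nat) < a * b \<Longrightarrow> i mod b < b"
  by (metis mod_less_divisor mult_0_right not_less0 gr0I)

lemma kron_mult:
  assumes A: "A \<in> carrier_mat ra ca" and B: "B \<in> carrier_mat rb cb"
    and C: "C \<in> carrier_mat ca cc" and D: "D \<in> carrier_mat cb cd"
  shows "kron_mat A B * kron_mat C D = kron_mat (A * C) (B * D)"
proof (rule eq_matI)
  fix i j assume i: "i < dim_row (kron_mat (A * C) (B * D))" and j: "j < dim_col (kron_mat (A * C) (B * D))"
  then have i': "i < ra * rb" and j': "j < cc * cd" using A B C D by auto
  have "(kron_mat A B * kron_mat C D) $$ (i,j) =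
      (\<Sum>k<ca*cb. kron_mat A B $$ (i,k) * kron_mat C D $$ (k,j))"
    using i' j' A B C D by (subst mult_entry) auto
  also have "\<dots> = (\<Sum>p<ca. \<Sum>q<cb. kron_mat A B $$ (i,p*cb+q) * kron_mat C D $$ (p*cb+q,j))"
    by (rule sum_reindex_prod)
  also have "\<dots> = (\<Sum>p<ca. \<Sum>q<cb. (A $$ (i div rb, p) * C $$ (p, j div cd)) *
        (B $$ (i mod rb, q) * D $$ (q, j mod cd)))"
  proof (intro sum.cong refl)
    fix p q assume p: "p \<in> {..<ca}" and q: "q \<in> {..<cb}"
    have "p*cb+q < (p+1)*cb" using q by simp
    also have "(p+1)*cb \<le> ca*cb" using p by (intro mult_le_mono1) simp
    finally have k: "p*cb+q < ca*cb" .
    have dv: "(p*cb+q) div cb = p" "(p*cb+q) mod cb = q" using q by auto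
    show "kron_mat A B $$ (i,p*cb+q) * kron_mat C D $$ (p*cb+q,j) =
        (A $$ (i div rb, p) * C $$ (p, j div cd)) * (B $$ (i mod rb, q) * D $$ (q, j mod cd))"
      using A B C D i' j' k dv by simp
  qed
  also have "\<dots> = (\<Sum>p<ca. A $$ (i div rb, p) * C $$ (p, j div cd)) *
        (\<Sum>q<cb. B $$ (i mod rb, q) * D $$ (q, j mod cd))"
    by (simp add: sum_product)
  also have "\<dots> = (A*C) $$ (i div rb, j div cd) * (B*D) $$ (i mod rb, j mod cd)"
    using A B C D i' j' div_lt_mult[OF i'] div_lt_mult[OF j'] mod_lt_mult[OF i'] mod_lt_mult[OF j']
    by (simp add: scalar_prod_def lessThan_atLeast0)
  also have "\<dots> = kron_mat (A * C) (B * D) $$ (i,j)"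
    using A B C D i' j' by simp
  finally show "(kron_mat A B * kron_mat C D) $$ (i,j) = kron_mat (A * C) (B * D) $$ (i,j)" .
qed (use A B C D in auto)


lemma dagger_dims[simp]: "dim_row (dagger A) = dim_col A" "dim_col (dagger A) = dim_row A"
  by (simp_all add: dagger_def)

lemma dagger_index[simp]: "i < dim_col A \<Longrightarrow> j < dim_row A \<Longrightarrow> dagger A $$ (i,j) = cnj (A $$ (j,i))"
  by (simp add: dagger_def)

lemma dagger_carrier: "A \<in> carrier_mat r c \<Longrightarrow> dagger A \<in> carrier_mat c r"
  by auto

lemma kron_carrier: "A \<in> carrier_mat ra ca \<Longrightarrow> B \<in> carrier_mat rb cb \<Longrightarrow> kron_mat A B \<in> carrier_mat (ra*rb) (ca*cb)"
  by auto

lemma dagger_kron: "dagger (kron_mat A B) = kron_mat (dagger A) (dagger B)"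
proof (rule eq_matI)
  fix i j assume i: "i < dim_row (kron_mat (dagger A) (dagger B))" and j: "j < dim_col (kron_mat (dagger A) (dagger B))"
  then have i': "i < dim_col A * dim_col B" and j': "j < dim_row A * dim_row B" by auto
  show "dagger (kron_mat A B) $$ (i, j) = kron_mat (dagger A) (dagger B) $$ (i, j)"
    using i' j' div_lt_mult[OF i'] div_lt_mult[OF j'] mod_lt_mult[OF i'] mod_lt_mult[OF j'] by simp
qed auto

lemma ket_bra_dims[simp]: "dim_row (ket_bra v) = dim_vec v" "dim_col (ket_bra v) = dim_vec v"
  by (simp_all add: ket_bra_def)

lemma kron_vec_dim[simp]: "dim_vec (kron_vec u v) = dim_vec u * dim_vec v"
  by (simp add: kron_vec_def)

lemma ket_bra_kron: "ket_bra (kron_vec u v) = kron_mat (ket_bra u) (ket_bra v)"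
proof (rule eq_matI)
  fix i j assume i: "i < dim_row (kron_mat (ket_bra u) (ket_bra v))" and j: "j < dim_col (kron_mat (ket_bra u) (ket_bra v))"
  then have i': "i < dim_vec u * dim_vec v" and j': "j < dim_vec u * dim_vec v" by auto
  show "ket_bra (kron_vec u v) $$ (i, j) = kron_mat (ket_bra u) (ket_bra v) $$ (i, j)"
    using i' j' div_lt_mult[OF i'] div_lt_mult[OF j'] mod_lt_mult[OF i'] mod_lt_mult[OF j']
    by (simp add: ket_bra_def kron_vec_def)
qed auto

lemma kron_add_left:
  assumes "A \<in> carrier_mat ra ca" "A' \<in> carrier_mat ra ca"
  shows "kron_mat (A + A') B = kron_mat A B + kron_mat A' B"
proof (rule eq_matI)
  fix i j assume "i < dim_row (kron_mat A B + kron_mat A' B)" "j < dim_col (kron_mat A B + kron_mat A' B)"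
  then have i': "i < ra * dim_row B" and j': "j < ca * dim_col B" using assms by auto
  show "kron_mat (A + A') B $$ (i, j) = (kron_mat A B + kron_mat A' B) $$ (i, j)"
    using assms i' j' div_lt_mult[OF i'] div_lt_mult[OF j'] by (simp add: algebra_simps)
qed (use assms in auto)

lemma kron_add_right:
  assumes "B \<in> carrier_mat rb cb" "B' \<in> carrier_mat rb cb"
  shows "kron_mat A (B + B') = kron_mat A B + kron_mat A B'"
proof (rule eq_matI)
  fix i j assume "i < dim_row (kron_mat A B + kron_mat A B')" "j < dim_col (kron_mat A B + kron_mat A B')"
  then have i': "i < dim_row A * rb" and j': "j < dim_col A * cb" using assms by auto
  show "kron_mat A (B + B') $$ (i, j) = (kron_mat A B + kron_mat A B') $$ (i, j)"
    using assms i' j' mod_lt_mult[OF i'] mod_lt_mult[OF j'] by (simp add: algebra_simps)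
qed (use assms in auto)

lemma kron_zero_right: "kron_mat A (0\<^sub>m rb cb) = 0\<^sub>m (dim_row A * rb) (dim_col A * cb)"
proof (rule eq_matI)
  fix i j assume "i < dim_row (0\<^sub>m (dim_row A * rb) (dim_col A * cb) :: complex mat)"
     "j < dim_col (0\<^sub>m (dim_row A * rb) (dim_col A * cb) :: complex mat)"
  then have i': "i < dim_row A * rb" and j': "j < dim_col A * cb" by auto
  show "kron_mat A (0\<^sub>m rb cb) $$ (i, j) = 0\<^sub>m (dim_row A * rb) (dim_col A * cb) $$ (i, j)"
    using i' j' mod_lt_mult[OF i'] mod_lt_mult[OF j'] by simp
qed auto

lemma kron_one: "kron_mat (1\<^sub>m a) (1\<^sub>m b) = 1\<^sub>m (a*b)"
proof (rule eq_matI)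
  fix i j assume "i < dim_row (1\<^sub>m (a*b) :: complex mat)" "j < dim_col (1\<^sub>m (a*b) :: complex mat)"
  then have i': "i < a*b" and j': "j < a*b" by auto
  have eq: "(i div b = j div b \<and> i mod b = j mod b) \<longleftrightarrow> i = j"
    by (metis div_mult_mod_eq)
  have "kron_mat (1\<^sub>m a) (1\<^sub>m b) $$ (i, j) =
     (if i div b = j div b then 1 else 0) * (if i mod b = j mod b then 1 else 0)"
    using i' j' div_lt_mult[OF i'] div_lt_mult[OF j'] mod_lt_mult[OF i'] mod_lt_mult[OF j']
    by simp
  also have "\<dots> = 1\<^sub>m (a*b) $$ (i, j)"
    using i' j' eq by (simp only: index_one_mat(1)) (auto split: if_splits)
  finally show "kron_mat (1\<^sub>m a) (1\<^sub>m b) $$ (i, j) = 1\<^sub>m (a*b) $$ (i, j)" .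
qed auto

lemma less2: "(i::nat) < 2 \<Longrightarrow> i = 0 \<or> i = 1" by auto

lemma sigma0_one: "sigma0 = 1\<^sub>m 2"
  by (rule eq_matI) (auto dest!: less2 simp: sigma0_def mat_of_rows_list_def)

lemma sigma2_dims: "dim_row sigma2 = 2" "dim_col sigma2 = 2"
  unfolding sigma2_def mat_of_rows_list_def by simp_all

lemma sigma2_carrier: "sigma2 \<in> carrier_mat 2 2"
  using sigma2_dims by (rule carrier_matI)

lemma sigma2_entries[simp]: "sigma2 $$ (0,0) = 0" "sigma2 $$ (0,1) = - \<i>" "sigma2 $$ (1,0) = \<i>" "sigma2 $$ (1,1) = 0"
  "sigma2 $$ (0,Suc 0) = - \<i>" "sigma2 $$ (Suc 0,0) = \<i>" "sigma2 $$ (Suc 0,Suc 0) = 0"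
  by (simp_all add: sigma2_def mat_of_rows_list_def)

lemma pauli_carrier: "pauli k \<in> carrier_mat 2 2"
  using sigma2_carrier by (simp add: pauli_def sigma0_one)

lemma mult2: "A \<in> carrier_mat 2 2 \<Longrightarrow> B \<in> carrier_mat 2 2 \<Longrightarrow> i < 2 \<Longrightarrow> j < 2 \<Longrightarrow>
  (A*B) $$ (i,j) = A$$(i,0)*B$$(0,j) + A$$(i,1)*B$$(1,j)"
proof -
  assume a: "A \<in> carrier_mat 2 2" "B \<in> carrier_mat 2 2" "i < 2" "j < 2"
  then have "(A*B) $$ (i,j) = (\<Sum>k<2. A $$ (i,k) * B $$ (k,j))"
    by (subst mult_entry) auto
  also have "\<dots> = A$$(i,0)*B$$(0,j) + A$$(i,1)*B$$(1,j)"
    by (simp add: eval_nat_numeral)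
  finally show ?thesis .
qed


lemma sigma_bar_carrier: "sigma_bar x \<in> carrier_mat (2 ^ length x) (2 ^ length x)"
proof (induction x)
  case Nil then show ?case by (simp add: sigma_bar_def tensor_mats_def)
next
  case (Cons a x)
  have "sigma_bar (a # x) = kron_mat (pauli a) (sigma_bar x)"
    by (simp add: sigma_bar_def tensor_mats_def)
  then show ?case using kron_carrier[OF pauli_carrier Cons] by simp
qed

lemma sigma_bar_Cons: "sigma_bar (a # x) = kron_mat (pauli a) (sigma_bar x)"
  by (simp add: sigma_bar_def tensor_mats_def)

lemma sigma2_unitary: "sigma2 * dagger sigma2 = 1\<^sub>m 2"
proof (rule eq_matI)
  fix i j assume "i < dim_row (1\<^sub>m 2 :: complex mat)" "j < dim_col (1\<^sub>m 2 :: complex mat)"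
  then have i: "i < 2" and j: "j < 2" by auto
  have d2: "dagger sigma2 \<in> carrier_mat 2 2" using sigma2_carrier by (rule dagger_carrier)
  have "(sigma2 * dagger sigma2) $$ (i,j) = sigma2$$(i,0)*cnj(sigma2$$(j,0)) + sigma2$$(i,1)*cnj(sigma2$$(j,1))"
    using mult2[OF sigma2_carrier d2 i j] i j by (simp add: sigma2_dims)
  then show "(sigma2 * dagger sigma2) $$ (i, j) = 1\<^sub>m 2 $$ (i, j)"
    using less2[OF i] less2[OF j] by auto
qed (use sigma2_carrier in auto)

lemma pauli_unitary: "pauli k * dagger (pauli k) = 1\<^sub>m 2"
proof -
  have "1\<^sub>m 2 * dagger (1\<^sub>m 2) = (1\<^sub>m 2 :: complex mat)"
    by (rule eq_matI) (auto simp: mult_entry)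
  then show ?thesis using sigma2_unitary by (simp add: pauli_def sigma0_one)
qed

lemma sigma_bar_unitary: "sigma_bar x * dagger (sigma_bar x) = 1\<^sub>m (2 ^ length x)"
proof (induction x)
  case Nil then show ?case by (auto simp add: sigma_bar_def tensor_mats_def mult_entry)
next
  case (Cons a x)
  have "sigma_bar (a#x) * dagger (sigma_bar (a#x)) =
     kron_mat (pauli a * dagger (pauli a)) (sigma_bar x * dagger (sigma_bar x))"
    unfolding sigma_bar_Cons dagger_kron
    by (rule kron_mult[OF pauli_carrier sigma_bar_carrier dagger_carrier[OF pauli_carrier] dagger_carrier[OF sigma_bar_carrier]])
  then show ?case using Cons by (simp add: pauli_unitary kron_one)
qed

lemma real_qubit_dim[simp]: "dim_vec (real_qubit t) = 2"
  by (simp add: real_qubit_def)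

lemma ket_bra_qubit_carrier: "ket_bra (real_qubit t) \<in> carrier_mat 2 2"
  by (rule carrier_matI) (simp_all add: real_qubit_def)

lemma ket_bra_qubit_entries[simp]:
  "ket_bra (real_qubit t) $$ (0,0) = complex_of_real (cos t * cos t)"
  "ket_bra (real_qubit t) $$ (0,1) = complex_of_real (cos t * sin t)"
  "ket_bra (real_qubit t) $$ (1,0) = complex_of_real (sin t * cos t)"
  "ket_bra (real_qubit t) $$ (1,1) = complex_of_real (sin t * sin t)"
  "ket_bra (real_qubit t) $$ (0,Suc 0) = complex_of_real (cos t * sin t)"
  "ket_bra (real_qubit t) $$ (Suc 0,0) = complex_of_real (sin t * cos t)"
  "ket_bra (real_qubit t) $$ (Suc 0,Suc 0) = complex_of_real (sin t * sin t)"
  by (simp_all add: ket_bra_def real_qubit_def)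

lemma qubit_twirl:
  "pauli 0 * ket_bra (real_qubit t) * dagger (pauli 0) + (pauli 2 * ket_bra (real_qubit t) * dagger (pauli 2)) = 1\<^sub>m 2"
proof -
  let ?R = "ket_bra (real_qubit t)"
  have R: "?R \<in> carrier_mat 2 2" by (rule ket_bra_qubit_carrier)
  have d2: "dagger sigma2 \<in> carrier_mat 2 2" using sigma2_carrier by auto
  have m2: "sigma2 * ?R \<in> carrier_mat 2 2" using sigma2_carrier R by auto
  have dI: "dagger (1\<^sub>m 2) = (1\<^sub>m 2 :: complex mat)"
    by (rule eq_matI) auto
  have p0: "pauli 0 * ?R * dagger (pauli 0) = ?R"
    using R by (simp add: pauli_def sigma0_one dI)
  have c: "cos t * cos t + sin t * sin t = 1"
    by (metis sin_cos_squared_add3 add.commute)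
  have cc: "complex_of_real (cos t * cos t) + complex_of_real (sin t * sin t) = 1"
    using c by (metis of_real_add of_real_1)
  have cc': "complex_of_real (sin t * sin t) + complex_of_real (cos t * cos t) = 1"
    using cc by (simp add: add.commute)
  have p2: "pauli 2 = sigma2" by (simp add: pauli_def)
  show ?thesis
  proof (rule eq_matI)
    fix i j assume "i < dim_row (1\<^sub>m 2 :: complex mat)" "j < dim_col (1\<^sub>m 2 :: complex mat)"
    then have i: "i < 2" and j: "j < 2" by auto
    have SR: "(sigma2 * ?R) $$ (i,k) = sigma2$$(i,0)*?R$$(0,k) + sigma2$$(i,1)*?R$$(1,k)" if "k < 2" for k
      using mult2[OF sigma2_carrier R i that] .
    have "(sigma2 * ?R * dagger sigma2) $$ (i,j) =
        (sigma2 * ?R)$$(i,0)*cnj(sigma2$$(j,0)) + (sigma2 * ?R)$$(i,1)*cnj(sigma2$$(j,1))"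
      using mult2[OF m2 d2 i j] i j by (simp add: sigma2_dims)
    also have "\<dots> = (sigma2$$(i,0)*?R$$(0,0) + sigma2$$(i,1)*?R$$(1,0))*cnj(sigma2$$(j,0))
       + (sigma2$$(i,0)*?R$$(0,1) + sigma2$$(i,1)*?R$$(1,1))*cnj(sigma2$$(j,1))"
      using SR[of 0] SR[of 1] by simp
    finally have e: "(sigma2 * ?R * dagger sigma2) $$ (i,j) =
       (sigma2$$(i,0)*?R$$(0,0) + sigma2$$(i,1)*?R$$(1,0))*cnj(sigma2$$(j,0))
       + (sigma2$$(i,0)*?R$$(0,1) + sigma2$$(i,1)*?R$$(1,1))*cnj(sigma2$$(j,1))" .
    have "(pauli 0 * ?R * dagger (pauli 0) + (pauli 2 * ?R * dagger (pauli 2))) $$ (i, j)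
       = ?R $$ (i,j) + (sigma2 * ?R * dagger sigma2) $$ (i,j)"
      using i j R sigma2_carrier by (simp add: p0 p2 sigma2_dims)
    also have "\<dots> = 1\<^sub>m 2 $$ (i, j)"
      unfolding e using less2[OF i] less2[OF j] cc cc'
      by (elim disjE) (simp_all add: algebra_simps)
    finally show "(pauli 0 * ?R * dagger (pauli 0) + (pauli 2 * ?R * dagger (pauli 2))) $$ (i, j) = 1\<^sub>m 2 $$ (i, j)" .
  qed (use R sigma2_carrier in \<open>auto simp: pauli_def sigma0_one\<close>)
qed


definition msum :: "nat \<Rightarrow> 'a list \<Rightarrow> ('a \<Rightarrow> complex mat) \<Rightarrow> complex mat" where
  "msum d L f = foldr (\<lambda>x acc. f x + acc) L (0\<^sub>m d d)"

lemma msum_Nil[simp]: "msum d [] f = 0\<^sub>m d d" by (simp add: msum_def)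
lemma msum_Cons[simp]: "msum d (a # L) f = f a + msum d L f" by (simp add: msum_def)

lemma msum_carrier: "(\<And>x. x \<in> set L \<Longrightarrow> f x \<in> carrier_mat d d) \<Longrightarrow> msum d L f \<in> carrier_mat d d"
  by (induction L) auto

lemma msum_append:
  assumes "\<And>x. x \<in> set (L1 @ L2) \<Longrightarrow> f x \<in> carrier_mat d d"
  shows "msum d (L1 @ L2) f = msum d L1 f + msum d L2 f"
  using assms
proof (induction L1)
  case Nil
  then show ?case using msum_carrier[of L2 f d] by simp
next
  case (Cons a L1)
  have c1: "f a \<in> carrier_mat d d" using Cons.prems by simp
  have c2: "msum d L1 f \<in> carrier_mat d d" by (rule msum_carrier) (use Cons.prems in auto)
  have c3: "msum d L2 f \<in> carrier_mat d d" by (rule msum_carrier) (use Cons.prems in auto)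
  have "msum d (L1 @ L2) f = msum d L1 f + msum d L2 f" using Cons by auto
  then show ?case using c1 c2 c3 by simp
qed

lemma msum_concat:
  assumes "\<And>x. x \<in> set (concat (map g L)) \<Longrightarrow> f x \<in> carrier_mat d d"
  shows "msum d (concat (map g L)) f = msum d L (\<lambda>y. msum d (g y) f)"
  using assms
proof (induction L)
  case Nil then show ?case by simp
next
  case (Cons a L)
  have "msum d (concat (map g (a # L))) f = msum d (g a) f + msum d (concat (map g L)) f"
    using msum_append[of "g a" "concat (map g L)" f d] Cons.prems by simp
  then show ?case using Cons by simp
qed

lemma msum_cong: "(\<And>x. x \<in> set L \<Longrightarrow> f x = g x) \<Longrightarrow> msum d L f = msum d L g"
  by (induction L) auto

lemma kron_msum:
  assumes A: "A \<in> carrier_mat a a" and c: "\<And>x. x \<in> set L \<Longrightarrow> f x \<in> carrier_mat d d"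
  shows "kron_mat A (msum d L f) = msum (a * d) L (\<lambda>x. kron_mat A (f x))"
  using c
proof (induction L)
  case Nil then show ?case using A by (simp add: kron_zero_right)
next
  case (Cons x L)
  have c1: "f x \<in> carrier_mat d d" using Cons.prems by simp
  have c2: "msum d L f \<in> carrier_mat d d" by (rule msum_carrier) (use Cons.prems in auto)
  show ?case using Cons kron_add_right[OF c1 c2, of A] by simp
qed

lemma superop_const:
  assumes "\<And>x. x \<in> set L \<Longrightarrow> U x * \<rho> * dagger (U x) \<in> carrier_mat d d"
  shows "superop_apply d (map (\<lambda>x. (p, U x)) L) \<rho> = complex_of_real p \<cdot>\<^sub>m msum d L (\<lambda>x. U x * \<rho> * dagger (U x))"
  using assms
proof (induction L)
  case Nil then show ?case by (simp add: superop_apply_def)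
next
  case (Cons x L)
  have c1: "U x * \<rho> * dagger (U x) \<in> carrier_mat d d" using Cons.prems by simp
  have c2: "msum d L (\<lambda>x. U x * \<rho> * dagger (U x)) \<in> carrier_mat d d" by (rule msum_carrier) (use Cons.prems in auto)
  have "superop_apply d (map (\<lambda>x. (p, U x)) (x # L)) \<rho> =
     complex_of_real p \<cdot>\<^sub>m (U x * \<rho> * dagger (U x)) + superop_apply d (map (\<lambda>x. (p, U x)) L) \<rho>"
    by (simp add: superop_apply_def)
  then show ?case using Cons add_smult_distrib_left_mat[OF c1 c2] by simp
qed

lemma tensor_vecs_Cons: "tensor_vecs (b # bs) = kron_vec b (tensor_vecs bs)"
  by (simp add: tensor_vecs_def)

lemma B_states_dim: "b \<in> B_states \<Longrightarrow> dim_vec b = 2"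
  by (auto simp: B_states_def)

lemma tensor_vecs_dim: "set bs \<subseteq> B_states \<Longrightarrow> dim_vec (tensor_vecs bs) = 2 ^ length bs"
  by (induction bs) (auto simp: tensor_vecs_def B_states_dim)

lemma conj_carrier: "x \<in> set (List.n_lists k [0,2::nat]) \<Longrightarrow> \<rho> \<in> carrier_mat (2^k) (2^k) \<Longrightarrow>
   sigma_bar x * \<rho> * dagger (sigma_bar x) \<in> carrier_mat (2^k) (2^k)"
  using sigma_bar_carrier[of x] length_n_lists_elem[of x k "[0,2::nat]"]
  by (metis dagger_carrier mult_carrier_mat)

lemma twirl_main:
  "set bs \<subseteq> B_states \<Longrightarrow>
   msum (2 ^ length bs) (List.n_lists (length bs) [0,2::nat])
     (\<lambda>x. sigma_bar x * ket_bra (tensor_vecs bs) * dagger (sigma_bar x)) = 1\<^sub>m (2 ^ length bs)"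
proof (induction bs)
  case Nil
  have "ket_bra (tensor_vecs []) = 1\<^sub>m 1"
    by (rule eq_matI) (auto simp: ket_bra_def tensor_vecs_def)
  moreover have "sigma_bar [] = 1\<^sub>m 1" by (simp add: sigma_bar_def tensor_mats_def)
  moreover have "dagger (1\<^sub>m 1) = (1\<^sub>m 1 :: complex mat)" by (rule eq_matI) auto
  ultimately show ?case by simp
next
  case (Cons b bs)
  let ?m = "length bs"
  let ?d = "(2::nat) ^ ?m"
  from Cons.prems obtain t where b: "b = real_qubit t" by (auto simp: B_states_def)
  have bsB: "set bs \<subseteq> B_states" using Cons.prems by simp
  let ?R = "ket_bra (tensor_vecs bs)"
  let ?Rb = "ket_bra b"
  have R: "?R \<in> carrier_mat ?d ?d" using tensor_vecs_dim[OF bsB] by (intro carrier_matI) simp_all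
  have Rb: "?Rb \<in> carrier_mat 2 2" using b ket_bra_qubit_carrier by simp
  define G where "G = (\<lambda>ys. sigma_bar ys * ?R * dagger (sigma_bar ys))"
  have G: "G ys \<in> carrier_mat ?d ?d" if "ys \<in> set (List.n_lists ?m [0,2::nat])" for ys
    unfolding G_def by (rule conj_carrier[OF that R])
  have full: "ket_bra (tensor_vecs (b # bs)) = kron_mat ?Rb ?R"
    by (simp add: tensor_vecs_Cons ket_bra_kron)
  have step: "sigma_bar (y # ys) * ket_bra (tensor_vecs (b # bs)) * dagger (sigma_bar (y # ys))
     = kron_mat (pauli y * ?Rb * dagger (pauli y)) (G ys)"
    if ys: "ys \<in> set (List.n_lists ?m [0,2::nat])" for y ys
  proof -
    have lys: "length ys = ?m" using length_n_lists_elem[OF ys] .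
    have S: "sigma_bar ys \<in> carrier_mat ?d ?d" using sigma_bar_carrier[of ys] lys by simp
    have "sigma_bar (y # ys) * kron_mat ?Rb ?R = kron_mat (pauli y * ?Rb) (sigma_bar ys * ?R)"
      unfolding sigma_bar_Cons by (rule kron_mult[OF pauli_carrier S Rb R])
    moreover have "kron_mat (pauli y * ?Rb) (sigma_bar ys * ?R) * dagger (sigma_bar (y # ys))
        = kron_mat (pauli y * ?Rb * dagger (pauli y)) (sigma_bar ys * ?R * dagger (sigma_bar ys))"
      unfolding sigma_bar_Cons dagger_kron
      by (rule kron_mult[OF mult_carrier_mat[OF pauli_carrier Rb] mult_carrier_mat[OF S R]
            dagger_carrier[OF pauli_carrier] dagger_carrier[OF S]])
    ultimately show ?thesis unfolding full G_def by simp
  qed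
  have Tc: "pauli y * ?Rb * dagger (pauli y) \<in> carrier_mat 2 2" for y
    by (meson Rb dagger_carrier mult_carrier_mat pauli_carrier)
  have elems: "sigma_bar x * ket_bra (tensor_vecs (b # bs)) * dagger (sigma_bar x) \<in> carrier_mat (2 * ?d) (2 * ?d)"
    if "x \<in> set (concat (map (\<lambda>ys. map (\<lambda>y. y # ys) [0,2::nat]) (List.n_lists ?m [0,2::nat])))" for x
  proof -
    have "x \<in> set (List.n_lists (Suc ?m) [0,2::nat])" using that by simp
    moreover have "ket_bra (tensor_vecs (b # bs)) \<in> carrier_mat (2^Suc ?m) (2^Suc ?m)"
      using tensor_vecs_dim[OF Cons.prems] by (intro carrier_matI) simp_all
    ultimately show ?thesis using conj_carrier by (metis power_Suc)
  qed
  have "msum (2 ^ length (b # bs)) (List.n_lists (length (b # bs)) [0,2::nat])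
     (\<lambda>x. sigma_bar x * ket_bra (tensor_vecs (b # bs)) * dagger (sigma_bar x))
     = msum (2 * ?d) (concat (map (\<lambda>ys. map (\<lambda>y. y # ys) [0,2::nat]) (List.n_lists ?m [0,2::nat])))
     (\<lambda>x. sigma_bar x * ket_bra (tensor_vecs (b # bs)) * dagger (sigma_bar x))"
    by simp
  also have "\<dots> = msum (2 * ?d) (List.n_lists ?m [0,2::nat])
     (\<lambda>ys. msum (2 * ?d) (map (\<lambda>y. y # ys) [0,2::nat])
        (\<lambda>x. sigma_bar x * ket_bra (tensor_vecs (b # bs)) * dagger (sigma_bar x)))"
    by (rule msum_concat) (rule elems)
  also have "\<dots> = msum (2 * ?d) (List.n_lists ?m [0,2::nat]) (\<lambda>ys. kron_mat (1\<^sub>m 2) (G ys))"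
  proof (rule msum_cong)
    fix ys assume ys: "ys \<in> set (List.n_lists ?m [0,2::nat])"
    have "msum (2 * ?d) (map (\<lambda>y. y # ys) [0,2::nat])
        (\<lambda>x. sigma_bar x * ket_bra (tensor_vecs (b # bs)) * dagger (sigma_bar x))
        = kron_mat (pauli 0 * ?Rb * dagger (pauli 0)) (G ys) + kron_mat (pauli 2 * ?Rb * dagger (pauli 2)) (G ys)"
      using step[OF ys, of 0] step[OF ys, of 2] kron_carrier[OF Tc G[OF ys], of 2]
      by simp
    also have "\<dots> = kron_mat (pauli 0 * ?Rb * dagger (pauli 0) + pauli 2 * ?Rb * dagger (pauli 2)) (G ys)"
      by (rule kron_add_left[OF Tc Tc, symmetric])
    also have "\<dots> = kron_mat (1\<^sub>m 2) (G ys)" using qubit_twirl b by simp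
    finally show "msum (2 * ?d) (map (\<lambda>y. y # ys) [0,2::nat])
        (\<lambda>x. sigma_bar x * ket_bra (tensor_vecs (b # bs)) * dagger (sigma_bar x)) = kron_mat (1\<^sub>m 2) (G ys)" .
  qed
  also have "\<dots> = kron_mat (1\<^sub>m 2) (msum ?d (List.n_lists ?m [0,2::nat]) G)"
    by (rule kron_msum[symmetric]) (auto intro: G)
  also have "msum ?d (List.n_lists ?m [0,2::nat]) G = 1\<^sub>m ?d"
    using Cons.IH[OF bsB] unfolding G_def .
  also have "kron_mat (1\<^sub>m 2) (1\<^sub>m ?d) = 1\<^sub>m (2 ^ length (b # bs))"
    by (simp add: kron_one)
  finally show ?case .
qed


theorem theorem3:
  fixes n :: nat
  assumes "n \<ge> 1"
  shows "is_PQC n (tensor_power_states n B_states)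
           (map (\<lambda>x. (1 / 2 ^ n, sigma_bar x)) (List.n_lists n [0, 2]))
           (mixed_state (2 ^ n))"
proof -
  let ?L = "List.n_lists n [0, 2::nat]"
  have sup: "is_superop (2^n) (map (\<lambda>x. (1 / 2 ^ n, sigma_bar x)) ?L)"
    unfolding is_superop_def
  proof (intro conjI ballI)
    fix pU assume "pU \<in> set (map (\<lambda>x. (1 / 2 ^ n :: real, sigma_bar x)) ?L)"
    then obtain x where x: "x \<in> set ?L" and pU: "pU = (1 / 2 ^ n, sigma_bar x)" by auto
    have lx: "length x = n" using length_n_lists_elem[OF x] .
    have "unitary_mat (2^n) (sigma_bar x)"
      unfolding unitary_mat_def using sigma_bar_carrier[of x] sigma_bar_unitary[of x] lx by simp
    then show "case pU of (p, U) \<Rightarrow> 0 \<le> p \<and> unitary_mat (2 ^ n) U" using pU by simp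
  next
    have "sum_list (map fst (map (\<lambda>x. (1 / 2 ^ n :: real, sigma_bar x)) ?L)) = sum_list (map (\<lambda>x. 1 / 2 ^ n :: real) ?L)"
      by (simp add: comp_def)
    also have "\<dots> = of_nat (length ?L) * (1 / 2 ^ n)" by (rule sum_list_triv)
    also have "\<dots> = 1" by (simp add: length_n_lists)
    finally show "sum_list (map fst (map (\<lambda>x. (1 / 2 ^ n :: real, sigma_bar x)) ?L)) = 1" .
  qed
  have mc: "mixed_state (2^n) \<in> carrier_mat (2^n) (2^n)"
    by (simp add: mixed_state_def)
  have st: "dim_vec \<phi> = 2^n \<and> superop_apply (2^n) (map (\<lambda>x. (1 / 2 ^ n, sigma_bar x)) ?L) (ket_bra \<phi>) = mixed_state (2^n)"
    if "\<phi> \<in> tensor_power_states n B_states" for \<phi>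
  proof -
    from that obtain bs where bs: "\<phi> = tensor_vecs bs" "length bs = n" "set bs \<subseteq> B_states"
      by (auto simp: tensor_power_states_def)
    have dim: "dim_vec \<phi> = 2^n" using tensor_vecs_dim[OF bs(3)] bs by simp
    have R: "ket_bra \<phi> \<in> carrier_mat (2^n) (2^n)" using dim by (intro carrier_matI) simp_all
    have "superop_apply (2^n) (map (\<lambda>x. (1 / 2 ^ n, sigma_bar x)) ?L) (ket_bra \<phi>)
       = complex_of_real (1 / 2 ^ n) \<cdot>\<^sub>m msum (2^n) ?L (\<lambda>x. sigma_bar x * ket_bra \<phi> * dagger (sigma_bar x))"
      by (rule superop_const) (rule conj_carrier[OF _ R])
    also have "msum (2^n) ?L (\<lambda>x. sigma_bar x * ket_bra \<phi> * dagger (sigma_bar x)) = 1\<^sub>m (2^n)"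
      using twirl_main[OF bs(3)] bs by simp
    also have "complex_of_real (1 / 2 ^ n) \<cdot>\<^sub>m 1\<^sub>m (2^n) = mixed_state (2^n)"
      by (simp add: mixed_state_def)
    finally show ?thesis using dim by simp
  qed
  show ?thesis unfolding is_PQC_def using sup mc st by blast
qed


end
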